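(* Let $X,Y$ be real Hilbert spaces, let $K\subset X$ be a nonempty closed convex cone, and let $j:Y\times K\to\mathbb{R}$ be such that for every $\eta\in Y$ the function $j(\eta,\cdot):K\to\mathbb{R}$ is convex, positively homogeneous and Lipschitz continuous. Let $I$ be either $[0,T]$ ($T>0$) or $[0,+\infty)$, let $f:I\to X$, $\eta\in Y$, $u,z\in X$ and $t\in I$. Then $$u\in K\ \text{ and }\ j(\eta,v)-j(\eta,u)\ge (f(t)-z,v-u)_X\ \ \forall v\in K \quad\Longleftrightarrow\quad -u\in \mathrm{N}_{C(\eta,t)}(z).$$
   Context: Define $J:Y\times X\to(-\infty,+\infty]$ by $J(\eta,v)=j(\eta,v)$ if $v\in K$ and $J(\eta,v)=+\infty$ otherwise; $C(\eta)=\{\xi\in X: J(\eta,v)\ge(\xi,v)_X\ \forall v\in X\}$ and $C(\eta,t)=f(t)-C(\eta)$. For a nonempty closed convex set $D\subset X$, $\mathrm{N}_D(x)=\{\xi\in X:(\xi,w-x)_X\le 0\ \forall w\in D\}$ if $x\in D$, and $\mathrm{N}_D(x)=\emptyset$ if $x\notin D$. *)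

theory Defs
  imports "HOL-Analysis.Analysis" "HOL-Library.Extended_Real"
begin

definition Jfun :: "('y \<Rightarrow> 'x \<Rightarrow> real) \<Rightarrow> 'x set \<Rightarrow> 'y \<Rightarrow> 'x \<Rightarrow> ereal" where
  "Jfun j K \<eta> v = (if v \<in> K then ereal (j \<eta> v) else \<infinity>)"

definition Cset :: "('y \<Rightarrow> 'x::real_inner \<Rightarrow> real) \<Rightarrow> 'x set \<Rightarrow> 'y \<Rightarrow> 'x set" where
  "Cset j K \<eta> = {\<xi>. \<forall>v. Jfun j K \<eta> v \<ge> ereal (inner \<xi> v)}"

definition Ct :: "('y \<Rightarrow> 'x::real_inner \<Rightarrow> real) \<Rightarrow> 'x set \<Rightarrow> (real \<Rightarrow> 'x) \<Rightarrow> 'y \<Rightarrow> real \<Rightarrow> 'x set" where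
  "Ct j K f \<eta> t = {f t - \<xi> | \<xi>. \<xi> \<in> Cset j K \<eta>}"

definition normal_cone :: "'x::real_inner set \<Rightarrow> 'x \<Rightarrow> 'x set" where
  "normal_cone D x = (if x \<in> D then {\<xi>. \<forall>w\<in>D. inner \<xi> (w - x) \<le> 0} else {})"

end

theory Submission
  imports Defs
begin

lemma infdist_lessE:
  assumes "S \<noteq> {}" "infdist x S < r"
  shows "\<exists>y\<in>S. dist x y < r"
  using assms unfolding infdist_def
  by (auto simp: cInf_less_iff)

lemma parallelogram:
  fixes a b :: "'a::real_inner"
  shows "norm (a+b)^2 + norm (a-b)^2 = 2*norm a^2 + 2*norm b^2"
  by (simp add: power2_norm_eq_inner inner_add_left inner_add_right inner_diff_left inner_diff_right inner_commute)

lemma norm_diff_scale_sq: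
  fixes a b :: "'a::real_inner"
  shows "norm (a - t *\<^sub>R b)^2 = norm a^2 - 2*t*inner a b + t^2 * norm b^2"
  unfolding power2_norm_eq_inner
  by (simp add: inner_diff_left inner_diff_right inner_commute power2_eq_square algebra_simps)

lemma hilbert_sep:
  fixes S :: "'a::{real_inner,complete_space} set"
  assumes cl: "closed S" and cv: "convex S" and ne: "S \<noteq> {}" and xn: "x \<notin> S"
  shows "\<exists>a c. inner a x < c \<and> (\<forall>y\<in>S. c < inner a y)"
proof -
  define d where "d = infdist x S"
  have d0: "d \<ge> 0" by (simp add: d_def infdist_nonneg)
  have dle: "d \<le> dist x y" if "y \<in> S" for y using that by (simp add: d_def infdist_le)
  have ex: "\<exists>y\<in>S. dist x y ^2 < d^2 + 1/Suc n" for n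
  proof -
    have "d < sqrt (d^2 + 1/Suc n)" using d0 by (simp add: real_less_rsqrt)
    then obtain y where y: "y\<in>S" "dist x y < sqrt (d^2 + 1/Suc n)"
      using infdist_lessE[OF ne] unfolding d_def by blast
    have "sqrt (dist x y ^2) < sqrt (d^2 + 1/Suc n)"
      using y(2) by (simp add: real_sqrt_abs)
    hence "dist x y ^2 < d^2 + 1/Suc n" by (simp only: real_sqrt_less_iff)
    thus ?thesis using y(1) by blast
  qed
  then obtain y where yS: "\<And>n. y n \<in> S" and yd: "\<And>n. dist x (y n) ^2 < d^2 + 1/Suc n"
    by metis
  have bound: "dist (y m) (y n) ^2 \<le> 2/Suc m + 2/Suc n" for m n
  proof -
    have mid: "(1/2) *\<^sub>R y m + (1/2) *\<^sub>R y n \<in> S"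
      using cv yS unfolding convex_def by (metis add_divide_distrib divide_self_if zero_le_divide_1_iff zero_le_numeral zero_neq_numeral one_add_one)
    have "d \<le> dist x ((1/2) *\<^sub>R y m + (1/2) *\<^sub>R y n)" using dle[OF mid] .
    hence "d^2 \<le> dist x ((1/2) *\<^sub>R y m + (1/2) *\<^sub>R y n) ^2" using d0 by (simp add: power_mono)
    moreover have "(x - y m) + (x - y n) = 2 *\<^sub>R (x - ((1/2) *\<^sub>R y m + (1/2) *\<^sub>R y n))"
      by (simp add: algebra_simps scaleR_2)
    hence "norm ((x - y m) + (x - y n))^2 = 4 * dist x ((1/2) *\<^sub>R y m + (1/2) *\<^sub>R y n) ^2"
      by (simp add: dist_norm power_mult_distrib)
    moreover have "(x - y m) - (x - y n) = y n - y m" by simp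
    moreover note parallelogram[of "x - y m" "x - y n"]
    ultimately have "norm (y n - y m)^2 \<le> 2*dist x (y m)^2 + 2*dist x (y n)^2 - 4*d^2"
      by (simp add: dist_norm)
    moreover have "dist (y m) (y n) = norm (y n - y m)" by (simp add: dist_norm norm_minus_commute)
    moreover have "dist x (y m) = norm (x - y m)" "dist x (y n) = norm (x - y n)" by (simp_all add: dist_norm)
    ultimately have h: "dist (y m) (y n)^2 \<le> 2*dist x (y m)^2 + 2*dist x (y n)^2 - 4*d^2" by simp
    have "2/real (Suc m) = 2*(1/Suc m)" "2/real (Suc n) = 2*(1/Suc n)" by simp_all
    thus ?thesis using h yd[of m] yd[of n] by linarith
  qed
  have "Cauchy y"
  proof (rule metric_CauchyI)
    fix e :: real assume e: "e > 0"
    obtain N :: nat where N: "4 / e^2 < N" using reals_Archimedean2 by blast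
    have e2: "e^2 > 0" using e by simp
    have "4 < N * e^2" using N e2 by (simp add: divide_less_eq)
    moreover have "real (Suc N) * e^2 = N*e^2 + e^2" by (simp add: algebra_simps)
    ultimately have "4 < real (Suc N) * e^2" using e2 by linarith
    hence "4/Suc N < e^2" by (simp add: pos_divide_less_eq mult.commute)
    show "\<exists>M. \<forall>m\<ge>M. \<forall>n\<ge>M. dist (y m) (y n) < e"
    proof (intro exI allI impI)
      fix m n assume mn: "N \<le> m" "N \<le> n"
      have "2/Suc m \<le> 2/Suc N" "2/Suc n \<le> 2/Suc N" using mn by (auto simp: frac_le)
      hence "dist (y m) (y n)^2 < e^2" using bound[of m n] \<open>4/Suc N < e^2\<close> by linarith
      thus "dist (y m) (y n) < e" using e by (simp add: power_less_imp_less_base)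
    qed
  qed
  then obtain p where yp: "y \<longlonglongrightarrow> p" using Cauchy_convergent_iff convergent_def by blast
  have pS: "p \<in> S" using closed_sequentially[OF cl yS yp] .
  have "(\<lambda>n. dist x (y n)^2) \<longlonglongrightarrow> dist x p ^2"
    by (intro tendsto_intros yp)
  moreover have "(\<lambda>n. d^2 + 1/Suc n) \<longlonglongrightarrow> d^2 + 0"
    by (intro tendsto_intros LIMSEQ_inverse_real_of_nat[unfolded inverse_eq_divide] ) 
  ultimately have "dist x p ^2 \<le> d^2"
    using yd by (intro LIMSEQ_le[of _ _ _ ]) (auto intro: less_imp_le)
  hence pmin: "dist x p \<le> dist x w" if "w \<in> S" for w
  proof -
    have "dist x p \<le> d" using power2_le_imp_le[OF \<open>dist x p ^2 \<le> d^2\<close> d0] .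
    thus ?thesis using dle[OF that] by linarith
  qed
  have var: "inner (x - p) (w - p) \<le> 0" if w: "w \<in> S" for w
  proof (rule ccontr)
    assume "\<not> ?thesis"
    hence pos: "inner (x - p) (w - p) > 0" by simp
    define q where "q = norm (w - p)^2"
    have q0: "q > 0" using pos unfolding q_def by (cases "w = p") auto
    define t where "t = min 1 (inner (x - p) (w - p) / q)"
    have t0: "t > 0" "t \<le> 1" using pos q0 by (auto simp: t_def)
    have tq: "t * q \<le> inner (x - p) (w - p)" using q0 pos
      by (auto simp: t_def min_def field_simps)
    have inS: "p + t *\<^sub>R (w - p) \<in> S"
    proof -
      have "(1 - t) *\<^sub>R p + t *\<^sub>R w \<in> S" using cv pS w t0 unfolding convex_def by auto
      moreover have "(1 - t) *\<^sub>R p + t *\<^sub>R w = p + t *\<^sub>R (w - p)" by (simp add: algebra_simps)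
      ultimately show ?thesis by simp
    qed
    have "dist x (p + t *\<^sub>R (w - p))^2 = norm ((x - p) - t *\<^sub>R (w - p))^2"
      by (simp add: dist_norm algebra_simps)
    also have "\<dots> = norm (x - p)^2 - 2*t*inner (x - p) (w - p) + t^2 * q"
      unfolding q_def by (rule norm_diff_scale_sq)
    also have "\<dots> < norm (x - p)^2"
    proof -
      have "t^2 * q = t * (t*q)" by (simp add: power2_eq_square)
      also have "\<dots> \<le> t * inner (x - p) (w - p)" using tq t0 by (simp add: mult_left_mono)
      finally have "t^2 * q \<le> t * inner (x - p) (w - p)" .
      moreover have "t * inner (x - p) (w - p) > 0" using t0 pos by simp
      ultimately show ?thesis by linarith
    qed
    finally have "dist x (p + t *\<^sub>R (w - p)) < dist x p"
      by (simp add: dist_norm power_less_imp_less_base)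
    thus False using pmin[OF inS] by simp
  qed
  define a where "a = p - x"
  have a0: "a \<noteq> 0" using pS xn unfolding a_def by auto
  have ge: "inner a w \<ge> inner a x + norm a ^2" if "w \<in> S" for w
  proof -
    have "inner a (w - p) \<ge> 0" using var[OF that] unfolding a_def
      by (metis inner_minus_left minus_diff_eq neg_0_le_iff_le)
    moreover have "p = x + a" by (simp add: a_def)
    ultimately show ?thesis
      by (simp add: inner_diff_right inner_add_right power2_norm_eq_inner)
  qed
  have n0: "norm a ^2 > 0" using a0 by simp
  show ?thesis
  proof (intro exI[of _ a] exI[of _ "inner a x + norm a^2/2"] conjI ballI)
    show "inner a x < inner a x + norm a^2/2" using n0 by simp
    fix w assume "w \<in> S"
    from ge[OF this] n0 show "inner a x + norm a^2/2 < inner a w" by linarith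
  qed
qed

lemma Cset_iff: "\<xi> \<in> Cset j K \<eta> \<longleftrightarrow> (\<forall>v\<in>K. inner \<xi> v \<le> j \<eta> v)"
  unfolding Cset_def Jfun_def by auto

lemma cone_nonneg:
  fixes K :: "'x::real_inner set"
  assumes K_cone: "cone K" and vK: "v \<in> K" and c0: "c < 0"
    and h: "\<And>w. w \<in> K \<Longrightarrow> c < F w"
    and Fhom: "\<And>l. l > 0 \<Longrightarrow> F (l *\<^sub>R v) = l * F v"
  shows "F v \<ge> 0"
proof (rule ccontr)
  assume "\<not> F v \<ge> 0"
  hence neg: "F v < 0" by simp
  define l where "l = c / F v"
  have l0: "l > 0" using neg c0 by (simp add: l_def divide_neg_neg)
  have "l *\<^sub>R v \<in> K" using K_cone vK l0 unfolding cone_def by simp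
  hence "c < F (l *\<^sub>R v)" by (rule h)
  also have "\<dots> = c" using Fhom[OF l0] neg by (simp add: l_def)
  finally show False by simp
qed

lemma support_approx:
  fixes K :: "'x::{real_inner, complete_space} set" and g :: "'x \<Rightarrow> real"
  assumes K_closed: "closed K" and K_convex: "convex K" and K_cone: "cone K" and K0: "0 \<in> K"
    and g_convex: "convex_on K g"
    and g_poshom: "\<And>c v. v \<in> K \<Longrightarrow> c > 0 \<Longrightarrow> g (c *\<^sub>R v) = c * g v"
    and g_cont: "continuous_on K g" and g0: "g 0 = 0"
    and uK: "u \<in> K" and r: "r < g u"
  shows "\<exists>\<xi>. (\<forall>v\<in>K. inner \<xi> v \<le> g v) \<and> r < inner \<xi> u"
proof -
  define E where "E = {p \<in> K \<times> UNIV. g (fst p) \<le> snd p}"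
  have Ecl: "closed E" unfolding E_def
    by (rule continuous_on_closed_Collect_le)
       (auto intro!: continuous_intros continuous_on_compose2[OF g_cont] closed_Times K_closed)
  have Ecv: "convex E" unfolding convex_alt
  proof (intro ballI allI impI)
    fix p q :: "'x \<times> real" and t :: real
    assume p: "p \<in> E" and q: "q \<in> E" and t: "0 \<le> t \<and> t \<le> 1"
    have inK: "(1 - t) *\<^sub>R fst p + t *\<^sub>R fst q \<in> K"
      using K_convex p q t unfolding convex_alt E_def by auto
    have "g ((1 - t) *\<^sub>R fst p + t *\<^sub>R fst q) \<le> (1 - t) * g (fst p) + t * g (fst q)"
      using convex_onD[OF g_convex] p q t unfolding E_def by auto
    also have "\<dots> \<le> (1 - t) * snd p + t * snd q"
      using p q t unfolding E_def by (auto intro!: add_mono mult_left_mono)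
    finally show "(1 - t) *\<^sub>R p + t *\<^sub>R q \<in> E" using inK unfolding E_def by (simp add: mem_Times_iff)
  qed
  have Ene: "E \<noteq> {}" using K0 g0 unfolding E_def by force
  have PE: "(u, r) \<notin> E" using r unfolding E_def by auto
  obtain a c where ac: "inner a (u, r) < c" and aE: "\<And>y. y \<in> E \<Longrightarrow> c < inner a y"
    using hilbert_sep[OF Ecl Ecv Ene PE] by blast
  obtain p \<alpha> where a: "a = (p, \<alpha>)" by (cases a)
  have c0: "c < 0" using aE[of "(0,0)"] K0 g0 by (simp add: E_def a)
  have hnn: "inner p v + \<alpha> * g v \<ge> 0" if vK: "v \<in> K" for v
  proof -
    have "0 \<le> (\<lambda>w. inner p w + \<alpha> * g w) v"
    proof (rule cone_nonneg[OF K_cone vK c0])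
      fix w assume "w \<in> K"
      hence "(w, g w) \<in> E" by (simp add: E_def)
      from aE[OF this] show "c < inner p w + \<alpha> * g w" by (simp add: a)
    next
      fix l :: real assume "l > 0"
      thus "inner p (l *\<^sub>R v) + \<alpha> * g (l *\<^sub>R v) = l * (inner p v + \<alpha> * g v)"
        using g_poshom[OF vK] by (simp add: algebra_simps)
    qed
    thus ?thesis by simp
  qed
  have ur: "inner p u + \<alpha> * r < c" using ac by (simp add: a)
  have "\<alpha> * (g u - r) > 0" using hnn[OF uK] ur c0 by (simp add: algebra_simps)
  hence al: "\<alpha> > 0" using r by (simp add: zero_less_mult_iff)
  define \<xi> where "\<xi> = (- 1/\<alpha>) *\<^sub>R p"
  show ?thesis
  proof (intro exI[of _ \<xi>] conjI ballI)
    fix v assume "v \<in> K"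
    from hnn[OF this] al show "inner \<xi> v \<le> g v"
      by (simp add: \<xi>_def field_simps)
  next
    from ur c0 al show "r < inner \<xi> u"
      by (simp add: \<xi>_def field_simps)
  qed
qed


theorem lemma3p1:
  fixes K :: "'x::{real_inner, complete_space} set"
    and j :: "'y::{real_inner, complete_space} \<Rightarrow> 'x \<Rightarrow> real"
    and I :: "real set" and T :: real
    and f :: "real \<Rightarrow> 'x" and \<eta> :: 'y and u z :: 'x and t :: real
  assumes K_ne: "K \<noteq> {}" and K_closed: "closed K" and K_convex: "convex K" and K_cone: "cone K"
    and j_convex: "\<And>\<eta>. convex_on K (j \<eta>)"
    and j_poshom: "\<And>\<eta> c v. v \<in> K \<Longrightarrow> c > 0 \<Longrightarrow> j \<eta> (c *\<^sub>R v) = c * j \<eta> v"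
    and j_lip: "\<And>\<eta>. \<exists>L. L-lipschitz_on K (j \<eta>)"
    and I_def: "(T > 0 \<and> I = {0..T}) \<or> I = {0..}"
    and t_in: "t \<in> I"
  shows "(u \<in> K \<and> (\<forall>v\<in>K. j \<eta> v - j \<eta> u \<ge> inner (f t - z) (v - u)))
         \<longleftrightarrow> - u \<in> normal_cone (Ct j K f \<eta> t) z"
proof -
  define g where "g = j \<eta>"
  define \<xi>0 where "\<xi>0 = f t - z"
  define C where "C = Cset j K \<eta>"
  have Ceq: "\<xi> \<in> C \<longleftrightarrow> (\<forall>v\<in>K. inner \<xi> v \<le> g v)" for \<xi>
    unfolding C_def g_def by (rule Cset_iff)
  obtain k where "k \<in> K" using K_ne by blast
  hence K0: "0 \<in> K" using K_cone unfolding cone_def by (metis order_refl scaleR_zero_left)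
  have g0: "g 0 = 0" using j_poshom[OF K0, of 2 \<eta>] by (simp add: g_def)
  have g_cont: "continuous_on K g"
    using j_lip[of \<eta>] lipschitz_on_continuous_on unfolding g_def by blast
  have g_hom: "\<And>c v. v \<in> K \<Longrightarrow> c > 0 \<Longrightarrow> g (c *\<^sub>R v) = c * g v"
    unfolding g_def by (rule j_poshom)
  have RHS: "- u \<in> normal_cone (Ct j K f \<eta> t) z \<longleftrightarrow>
      (\<xi>0 \<in> C \<and> (\<forall>\<xi>\<in>C. inner u \<xi> \<le> inner u \<xi>0))"
  proof -
    have zz: "z = f t - \<xi> \<longleftrightarrow> \<xi> = f t - z" for \<xi> by (auto simp: algebra_simps)
    have zin: "z \<in> Ct j K f \<eta> t \<longleftrightarrow> \<xi>0 \<in> C"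
      unfolding Ct_def C_def \<xi>0_def by (simp only: mem_Collect_eq zz) blast
    have "(\<forall>w\<in>Ct j K f \<eta> t. inner (- u) (w - z) \<le> 0) \<longleftrightarrow> (\<forall>\<xi>\<in>C. inner u \<xi> \<le> inner u \<xi>0)"
    proof -
      have e: "inner u ((f t - \<xi>) - z) = inner u \<xi>0 - inner u \<xi>" for \<xi>
        unfolding \<xi>0_def by (simp add: inner_diff_right algebra_simps)
      show ?thesis unfolding Ct_def C_def[symmetric]
      proof
        assume H: "\<forall>w\<in>{f t - \<xi> |\<xi>. \<xi> \<in> C}. inner (- u) (w - z) \<le> 0"
        show "\<forall>\<xi>\<in>C. inner u \<xi> \<le> inner u \<xi>0"
        proof
          fix \<xi> assume "\<xi> \<in> C"
          hence "f t - \<xi> \<in> {f t - \<xi> |\<xi>. \<xi> \<in> C}" by blast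
          from H[rule_format, OF this] e[of \<xi>] show "inner u \<xi> \<le> inner u \<xi>0" by simp
        qed
      next
        assume H2: "\<forall>\<xi>\<in>C. inner u \<xi> \<le> inner u \<xi>0"
        show "\<forall>w\<in>{f t - \<xi> |\<xi>. \<xi> \<in> C}. inner (- u) (w - z) \<le> 0"
        proof
          fix w assume "w \<in> {f t - \<xi> |\<xi>. \<xi> \<in> C}"
          then obtain \<xi> where w: "w = f t - \<xi>" "\<xi> \<in> C" by blast
          show "inner (- u) (w - z) \<le> 0" using H2 w e[of \<xi>] by simp
        qed
      qed
    qed
    thus ?thesis using zin unfolding normal_cone_def by auto
  qed
  show ?thesis
    unfolding RHS g_def[symmetric] \<xi>0_def[symmetric]
  proof
    assume L: "u \<in> K \<and> (\<forall>v\<in>K. inner \<xi>0 (v - u) \<le> g v - g u)"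
    hence uK: "u \<in> K" and ineq: "\<And>v. v \<in> K \<Longrightarrow> inner \<xi>0 (v - u) \<le> g v - g u" by auto
    have "inner \<xi>0 (0 - u) \<le> g 0 - g u" using ineq[OF K0] .
    hence le1: "g u \<le> inner \<xi>0 u" using g0 by (simp add: inner_diff_right)
    have u2: "2 *\<^sub>R u \<in> K" using K_cone uK unfolding cone_def by simp
    have "inner \<xi>0 (2 *\<^sub>R u - u) \<le> g (2 *\<^sub>R u) - g u" using ineq[OF u2] .
    hence le2: "inner \<xi>0 u \<le> g u" using g_hom[OF uK, of 2] by (simp add: scaleR_2 inner_add_right)
    have gu: "g u = inner \<xi>0 u" using le1 le2 by simp
    have x0C: "\<xi>0 \<in> C" unfolding Ceq
    proof
      fix v assume "v \<in> K"
      from ineq[OF this] gu show "inner \<xi>0 v \<le> g v" by (simp add: inner_diff_right)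
    qed
    moreover have "\<forall>\<xi>\<in>C. inner u \<xi> \<le> inner u \<xi>0"
    proof
      fix \<xi> assume "\<xi> \<in> C"
      hence "inner \<xi> u \<le> g u" using uK Ceq by blast
      thus "inner u \<xi> \<le> inner u \<xi>0" using gu by (simp add: inner_commute)
    qed
    ultimately show "\<xi>0 \<in> C \<and> (\<forall>\<xi>\<in>C. inner u \<xi> \<le> inner u \<xi>0)" ..
  next
    assume R: "\<xi>0 \<in> C \<and> (\<forall>\<xi>\<in>C. inner u \<xi> \<le> inner u \<xi>0)"
    hence x0C: "\<xi>0 \<in> C" and mx: "\<And>\<xi>. \<xi> \<in> C \<Longrightarrow> inner u \<xi> \<le> inner u \<xi>0" by auto
    have uK: "u \<in> K"
    proof (rule ccontr)
      assume un: "u \<notin> K"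
      obtain a c where ac: "inner a u < c" and aK: "\<And>v. v \<in> K \<Longrightarrow> c < inner a v"
        using hilbert_sep[OF K_closed K_convex K_ne un] by blast
      have c0: "c < 0" using aK[OF K0] by simp
      have ann: "inner a v \<ge> 0" if vK: "v \<in> K" for v
        using cone_nonneg[OF K_cone vK c0, of "inner a"] aK by simp
      have "\<xi>0 - a \<in> C" unfolding Ceq
      proof
        fix v assume vK: "v \<in> K"
        have "inner \<xi>0 v \<le> g v" using x0C vK Ceq by blast
        thus "inner (\<xi>0 - a) v \<le> g v" using ann[OF vK] by (simp add: inner_diff_left)
      qed
      from mx[OF this] have "inner a u \<ge> 0" by (simp add: inner_diff_right inner_commute)
      thus False using ac c0 by simp
    qed
    have gu: "g u = inner \<xi>0 u"
    proof (rule antisym)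
      show "inner \<xi>0 u \<le> g u" using x0C uK Ceq by blast
      show "g u \<le> inner \<xi>0 u"
      proof (rule ccontr)
        assume "\<not> g u \<le> inner \<xi>0 u"
        hence r: "inner \<xi>0 u < g u" by simp
        obtain \<xi> where \<xi>C: "\<forall>v\<in>K. inner \<xi> v \<le> g v" and gt: "inner \<xi>0 u < inner \<xi> u"
          using support_approx[OF K_closed K_convex K_cone K0 j_convex[of \<eta>, folded g_def]
              g_hom g_cont g0 uK r] by blast
        have "\<xi> \<in> C" using \<xi>C Ceq by blast
        from mx[OF this] gt show False by (simp add: inner_commute)
      qed
    qed
    show "u \<in> K \<and> (\<forall>v\<in>K. inner \<xi>0 (v - u) \<le> g v - g u)"
    proof (intro conjI ballI uK)
      fix v assume "v \<in> K"
      hence "inner \<xi>0 v \<le> g v" using x0C Ceq by blast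
      thus "inner \<xi>0 (v - u) \<le> g v - g u" using gu by (simp add: inner_diff_right)
    qed
  qed
qed

end
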